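(* Let $Q\in\mathcal N_\kappa(\mathcal H)$ have the realization $Q(z)=Q(z_0)^*+(z-\overline{z_0})\Gamma^+\big(I+(z-z_0)(A-z)^{-1}\big)\Gamma$ with $Q(z_0)$ boundedly invertible. Let $\widehat Q(z):=-Q(z)^{-1}$, $\Gamma_z:=\big(I+(z-z_0)(A-z)^{-1}\big)\Gamma$, $\widehat\Gamma:=-\Gamma Q(z_0)^{-1}$, let $\widehat A$ be the relation given by $(\widehat A-z)^{-1}=(A-z)^{-1}+\Gamma_z\widehat Q(z)\Gamma_{\overline z}^+$, and $\widehat\Gamma_z:=\big(I+(z-z_0)(\widehat A-z)^{-1}\big)\widehat\Gamma$. Let $x_0,\dots,x_{\ell-1}$ be a Jordan chain of $A$ at $\alpha\in\mathbb R$ and $x(z):=x_0+(z-\alpha)x_1+\dots+(z-\alpha)^{\ell-1}x_{\ell-1}$. Then, for all $z\in\varrho(A)\cap\varrho(\widehat A)$ at which $Q(z)$ is boundedly invertible, $$\widehat\Gamma_z\Gamma^+x(z)=\frac{-1}{z-\overline{z_0}}\Big(x(z)+(z-\alpha)^\ell\big(I+(z-\overline{z_0})(\widehat A-z)^{-1}\big)(A-\overline{z_0})^{-1}x_{\ell-1}\Big).$$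
   Context: $\mathcal H$ is a Hilbert space. $Q\in\mathcal N_\kappa(\mathcal H)$: an $\mathcal L(\mathcal H)$-valued function meromorphic in $\mathbb C\setminus\mathbb R$, $Q(\overline z)^*=Q(z)$, whose kernel $\frac{Q(z)-Q(w)^*}{z-\overline w}$ on $\mathcal D(Q)\cap\mathbb C^+$ has exactly $\kappa$ negative squares. The realization consists of a Pontryagin space $(\mathcal K,[\cdot,\cdot])$, a self-adjoint linear relation $A$ in $\mathcal K$, $z_0\in\varrho(A)\cap\mathbb C^+$ (so also $\overline{z_0}\in\varrho(A)$), and bounded $\Gamma:\mathcal H\to\mathcal K$; $\Gamma^+$ is the Pontryagin-space adjoint. A Jordan chain of $A$ at $\alpha$: $x_0\ne0$, $\{x_0,\alpha x_0\}\in A$, $\{x_j,\alpha x_j+x_{j-1}\}\in A$ for $1\le j<\ell$. *)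

theory Defs
  imports "HOL-Analysis.Analysis"
begin

class complex_vector = real_vector +
  fixes scaleC :: "complex \<Rightarrow> 'a \<Rightarrow> 'a" (infixr \<open>*\<^sub>C\<close> 75)
  assumes scaleC_add_right: "scaleC a (x + y) = scaleC a x + scaleC a y"
    and scaleC_add_left: "scaleC (a + b) x = scaleC a x + scaleC b x"
    and scaleC_scaleC: "scaleC a (scaleC b x) = scaleC (a * b) x"
    and scaleC_one: "scaleC 1 x = x"
    and scaleR_scaleC: "scaleR r x = scaleC (complex_of_real r) x"

class complex_inner = complex_vector + real_normed_vector +
  fixes cinner :: "'a \<Rightarrow> 'a \<Rightarrow> complex"
  assumes cinner_commute: "cinner x y = cnj (cinner y x)"
    and cinner_add_left: "cinner (x + y) z = cinner x z + cinner y z"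
    and cinner_scaleC_left: "cinner (scaleC c x) y = c * cinner x y"
    and cinner_real_nonneg: "Im (cinner x x) = 0 \<and> Re (cinner x x) \<ge> 0"
    and cinner_eq_zero_iff: "cinner x x = 0 \<longleftrightarrow> x = 0"
    and norm_eq_sqrt_cinner: "norm x = sqrt (Re (cinner x x))"

class chilbert_space = complex_inner + complete_space

text \<open>The classes are consistent: the complex numbers form a Hilbert space.\<close>
instantiation complex :: complex_vector
begin
definition scaleC_complex_def: "scaleC (a::complex) (x::complex) = a * x"
instance
  by standard (auto simp: scaleC_complex_def algebra_simps scaleR_conv_of_real)
end

instantiation complex :: complex_inner
begin
definition cinner_complex_def: "cinner (x::complex) y = x * cnj y"
instance
proof
  fix x y z c :: complex
  show "cinner x y = cnj (cinner y x)" by (simp add: cinner_complex_def mult.commute)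
  show "cinner (x + y) z = cinner x z + cinner y z" by (simp add: cinner_complex_def algebra_simps)
  show "cinner (c *\<^sub>C x) y = c * cinner x y" by (simp add: cinner_complex_def scaleC_complex_def)
  show "Im (cinner x x) = 0 \<and> Re (cinner x x) \<ge> 0"
    by (simp add: cinner_complex_def complex_mult_cnj)
  show "cinner x x = 0 \<longleftrightarrow> x = 0" by (simp add: cinner_complex_def)
  show "norm x = sqrt (Re (cinner x x))"
    by (simp add: cinner_complex_def complex_mult_cnj cmod_def power2_eq_square)
qed
end

instance complex :: chilbert_space ..

definition bounded_clinear :: "('a::complex_inner \<Rightarrow> 'b::complex_inner) \<Rightarrow> bool" where
  "bounded_clinear f \<longleftrightarrow> (\<forall>x y. f (x + y) = f x + f y) \<and> (\<forall>c x. f (c *\<^sub>C x) = c *\<^sub>C f x)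
     \<and> (\<exists>K. \<forall>x. norm (f x) \<le> norm x * K)"

definition bdd_invertible :: "('a::complex_inner \<Rightarrow> 'b::complex_inner) \<Rightarrow> bool" where
  "bdd_invertible T \<longleftrightarrow> bounded_clinear T \<and> bij T \<and> bounded_clinear (inv T)"

definition hadj :: "('a::complex_inner \<Rightarrow> 'a) \<Rightarrow> ('a \<Rightarrow> 'a)" where
  "hadj T = (THE S. \<forall>x y. cinner (T x) y = cinner x (S y))"

definition cspan :: "'a::complex_vector set \<Rightarrow> 'a set" where
  "cspan S = {y. \<exists>T c. finite T \<and> T \<subseteq> S \<and> y = (\<Sum>s\<in>T. c s *\<^sub>C s)}"

text \<open>A Pontryagin space is modelled as a Hilbert space together with a fundamental symmetry
  J (bounded, J o J = I, J self-adjoint) whose negative part ker(J+I) is finite-dimensional;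
  the indefinite inner product is [x,y] = (Jx,y). Every Pontryagin space arises this way,
  and the Hilbert norm induces its (unique) Pontryagin space topology.\<close>
definition pontryagin_symmetry :: "('k::complex_inner \<Rightarrow> 'k) \<Rightarrow> bool" where
  "pontryagin_symmetry J \<longleftrightarrow> bounded_clinear J \<and> (\<forall>x. J (J x) = x)
     \<and> (\<forall>x y. cinner (J x) y = cinner x (J y))
     \<and> (\<exists>S. finite S \<and> {x. J x = - x} \<subseteq> cspan S)"

definition ind :: "('k::complex_inner \<Rightarrow> 'k) \<Rightarrow> 'k \<Rightarrow> 'k \<Rightarrow> complex" where
  "ind J x y = cinner (J x) y"

definition kadj :: "('k::complex_inner \<Rightarrow> 'k) \<Rightarrow> ('h::complex_inner \<Rightarrow> 'k) \<Rightarrow> ('k \<Rightarrow> 'h)" where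
  "kadj J G = (THE S. \<forall>h k. ind J (G h) k = cinner h (S k))"

definition rel_adjoint :: "('k::complex_inner \<Rightarrow> 'k) \<Rightarrow> ('k \<times> 'k) set \<Rightarrow> ('k \<times> 'k) set" where
  "rel_adjoint J A = {(f, g). \<forall>(u, v)\<in>A. ind J v f = ind J u g}"

definition selfadjoint_rel :: "('k::complex_inner \<Rightarrow> 'k) \<Rightarrow> ('k \<times> 'k) set \<Rightarrow> bool" where
  "selfadjoint_rel J A \<longleftrightarrow> A = rel_adjoint J A"

definition shifted_inverse :: "('k::complex_vector \<times> 'k) set \<Rightarrow> complex \<Rightarrow> ('k \<times> 'k) set" where
  "shifted_inverse A z = {(g - z *\<^sub>C f, f) | f g. (f, g) \<in> A}"

definition resolvent_set :: "('k::complex_inner \<times> 'k) set \<Rightarrow> complex set" where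
  "resolvent_set A = {z. \<exists>R. bounded_clinear R \<and> (\<forall>y x. (y, x) \<in> shifted_inverse A z \<longleftrightarrow> x = R y)}"

definition resolvent :: "('k::complex_inner \<times> 'k) set \<Rightarrow> complex \<Rightarrow> ('k \<Rightarrow> 'k)" where
  "resolvent A z = (THE R. \<forall>y x. (y, x) \<in> shifted_inverse A z \<longleftrightarrow> x = R y)"

definition jordan_chain :: "('k::complex_vector \<times> 'k) set \<Rightarrow> complex \<Rightarrow> nat \<Rightarrow> (nat \<Rightarrow> 'k) \<Rightarrow> bool" where
  "jordan_chain A \<alpha> l x \<longleftrightarrow> 1 \<le> l \<and> x 0 \<noteq> 0 \<and> (x 0, \<alpha> *\<^sub>C x 0) \<in> A
     \<and> (\<forall>j. 1 \<le> j \<and> j < l \<longrightarrow> (x j, \<alpha> *\<^sub>C x j + x (j - 1)) \<in> A)"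

definition Gamma_z :: "('k::complex_inner \<times> 'k) set \<Rightarrow> complex \<Rightarrow> ('h \<Rightarrow> 'k) \<Rightarrow> complex \<Rightarrow> 'h \<Rightarrow> 'k" where
  "Gamma_z A z0 G z = (\<lambda>h. G h + (z - z0) *\<^sub>C resolvent A z (G h))"

end

theory Submission
  imports Defs
begin


global_interpretation cvs: vector_space "scaleC :: complex \<Rightarrow> 'a \<Rightarrow> 'a::complex_vector"
  by unfold_locales (auto simp: scaleC_add_right scaleC_add_left scaleC_scaleC scaleC_one)

lemma cinner_add_right: "cinner x (y + z) = cinner x y + cinner x (z::'a::complex_inner)"
proof -
  have "cinner x (y + z) = cnj (cinner (y + z) x)" by (rule cinner_commute)
  also have "\<dots> = cnj (cinner y x) + cnj (cinner z x)" by (simp add: cinner_add_left)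
  finally show ?thesis using cinner_commute[of x y] cinner_commute[of x z] by simp
qed
lemma cinner_scaleC_right: "cinner x (c *\<^sub>C y) = cnj c * cinner x (y::'a::complex_inner)"
proof -
  have "cinner x (c *\<^sub>C y) = cnj (cinner (c *\<^sub>C y) x)" by (rule cinner_commute)
  also have "\<dots> = cnj c * cnj (cinner y x)" by (simp add: cinner_scaleC_left)
  finally show ?thesis using cinner_commute[of x y] by simp
qed
lemma cinner_zero_left[simp]: "cinner 0 (y::'a::complex_inner) = 0"
  using cinner_scaleC_left[of 0 0 y] by simp
lemma cinner_zero_right[simp]: "cinner y (0::'a::complex_inner) = 0"
  using cinner_commute[of y 0] by simp
lemma cinner_minus_left: "cinner (- x) (y::'a::complex_inner) = - cinner x y"
proof -
  have "cinner (x + - x) y = cinner x y + cinner (-x) y" by (rule cinner_add_left)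
  then have "cinner x y + cinner (-x) y = 0" by simp
  then show ?thesis by (rule minus_unique[symmetric])
qed
lemma cinner_minus_right: "cinner y (- x::'a::complex_inner) = - cinner y x"
proof -
  have "cinner y (x + - x) = cinner y x + cinner y (-x)" by (rule cinner_add_right)
  then have "cinner y x + cinner y (-x) = 0" by simp
  then show ?thesis by (rule minus_unique[symmetric])
qed
lemma cinner_diff_left: "cinner (x - z) (y::'a::complex_inner) = cinner x y - cinner z y"
  by (simp only: diff_conv_add_uminus cinner_add_left cinner_minus_left)
lemma cinner_diff_right: "cinner y (x - z::'a::complex_inner) = cinner y x - cinner y z"
  by (simp only: diff_conv_add_uminus cinner_add_right cinner_minus_right)
lemma cinner_self_norm: "cinner x x = complex_of_real ((norm (x::'a::complex_inner))\<^sup>2)"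
proof -
  have "Im (cinner x x) = 0" "Re (cinner x x) \<ge> 0" using cinner_real_nonneg by auto
  moreover have "(norm x)\<^sup>2 = Re (cinner x x)"
    using norm_eq_sqrt_cinner[of x] \<open>Re (cinner x x) \<ge> 0\<close> by simp
  ultimately show ?thesis by (intro complex_eqI) simp_all
qed
lemma cinner_ext: "(\<And>h. cinner h a = cinner h b) \<Longrightarrow> a = (b::'a::complex_inner)"
proof -
  assume h: "\<And>h. cinner h a = cinner h b"
  have "cinner (a - b) (a - b) = 0" using h[of "a - b"] by (simp add: cinner_diff_right)
  then show ?thesis by (simp add: cinner_eq_zero_iff)
qed




lemma cauchy_schwarz: "cmod (cinner x y) \<le> norm x * norm (y::'a::complex_inner)"
proof (cases "y = 0")
  case True then show ?thesis by simp
next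
  case False
  define r where "r = (norm y)\<^sup>2"
  have r: "r > 0" using False by (simp add: r_def)
  define a where "a = cinner x y"
  define t where "t = a / complex_of_real r"
  have aa: "a * cnj a = complex_of_real ((cmod a)\<^sup>2)" by (simp add: complex_mult_cnj cmod_def)
  have e1: "cnj t * a = complex_of_real ((cmod a)\<^sup>2 / r)"
    using aa by (simp add: t_def mult.commute)
  have e2: "t * cnj a = complex_of_real ((cmod a)\<^sup>2 / r)"
    using aa by (simp add: t_def)
  have e3: "t * cnj t * r = complex_of_real ((cmod a)\<^sup>2 / r)"
    using aa r by (simp add: t_def power2_eq_square)
  have yx: "cinner y x = cnj a" unfolding a_def by (rule cinner_commute)
  have f1: "cinner x (t *\<^sub>C y) = cnj t * a" by (simp only: cinner_scaleC_right a_def)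
  have f2: "cinner (t *\<^sub>C y) x = t * cnj a" by (simp only: cinner_scaleC_left yx)
  have f3: "cinner (t *\<^sub>C y) (t *\<^sub>C y) = t * cnj t * r"
    by (simp only: cinner_scaleC_left cinner_scaleC_right cinner_self_norm[of y] r_def mult.assoc mult.left_commute)
  have "cinner (x - t *\<^sub>C y) (x - t *\<^sub>C y) = cinner x x - cinner (t *\<^sub>C y) x - (cinner x (t *\<^sub>C y) - cinner (t *\<^sub>C y) (t *\<^sub>C y))"
    by (simp only: cinner_diff_left cinner_diff_right)
  also have "\<dots> = cinner x x - cnj t * a - t * cnj a + t * cnj t * r"
    unfolding f1 f2 f3 by (simp add: algebra_simps)
  also have "\<dots> = complex_of_real ((norm x)\<^sup>2 - (cmod a)\<^sup>2 / r)"
    unfolding e1 e2 e3 by (simp add: cinner_self_norm)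
  finally have "complex_of_real ((norm (x - t *\<^sub>C y))\<^sup>2) = complex_of_real ((norm x)\<^sup>2 - (cmod a)\<^sup>2 / r)"
    by (simp only: cinner_self_norm)
  then have "(norm (x - t *\<^sub>C y))\<^sup>2 = (norm x)\<^sup>2 - (cmod a)\<^sup>2 / r"
    by (simp only: of_real_eq_iff)
  moreover have "0 \<le> (norm (x - t *\<^sub>C y))\<^sup>2" by simp
  ultimately have "(cmod a)\<^sup>2 / r \<le> (norm x)\<^sup>2" by linarith
  then have "(cmod a)\<^sup>2 \<le> (norm x)\<^sup>2 * r" using r by (simp only: pos_divide_le_eq)
  also have "\<dots> = ((norm x) * norm y)\<^sup>2" unfolding r_def by (simp only: power_mult_distrib)
  finally have "(cmod a)\<^sup>2 \<le> ((norm x) * norm y)\<^sup>2" .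
  then show ?thesis unfolding a_def by (rule power2_le_imp_le) (simp_all only: zero_le_mult_iff norm_ge_zero simp_thms)
qed




lemma norm_sq_cinner: "(norm x)\<^sup>2 = Re (cinner x (x::'a::complex_inner))"
  using cinner_self_norm[of x] by simp

lemma bcl_add: "bounded_clinear f \<Longrightarrow> f (x + y) = f x + f y"
  unfolding bounded_clinear_def by blast
lemma bcl_scale: "bounded_clinear f \<Longrightarrow> f (c *\<^sub>C x) = c *\<^sub>C f x"
  unfolding bounded_clinear_def by blast

lemma bcl_bl: "bounded_clinear (f::'a::complex_inner \<Rightarrow> 'b::complex_inner) \<Longrightarrow> bounded_linear f"
proof -
  assume f: "bounded_clinear f"
  then obtain K where K: "\<And>x. norm (f x) \<le> norm x * K" unfolding bounded_clinear_def by blast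
  show ?thesis
  proof (rule bounded_linear_intro[OF _ _ K])
    show "f (x + y) = f x + f y" for x y by (rule bcl_add[OF f])
    show "f (scaleR r x) = scaleR r (f x)" for r x
      by (simp only: scaleR_scaleC bcl_scale[OF f])
  qed
qed

lemma bcl_zero: "bounded_clinear f \<Longrightarrow> f 0 = 0"
  by (rule linear_0[OF bounded_linear.linear[OF bcl_bl]])
lemma bcl_diff: "bounded_clinear f \<Longrightarrow> f (x - y) = f x - f y"
  by (rule linear_diff[OF bounded_linear.linear[OF bcl_bl]])
lemma bcl_minus: "bounded_clinear f \<Longrightarrow> f (- x) = - f x"
  by (rule linear_neg[OF bounded_linear.linear[OF bcl_bl]])
lemma bcl_sum: "bounded_clinear f \<Longrightarrow> f (sum g S) = (\<Sum>i\<in>S. f (g i))"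
  by (rule linear_sum[OF bounded_linear.linear[OF bcl_bl]])

lemma cinner_expand: "cinner (v - c *\<^sub>C w) (v - c *\<^sub>C w) =
   cinner v v - cnj c * cinner v w - c * cinner w v + cnj c * (c * cinner w (w::'a::complex_inner))"
proof -
  have "cinner (v - c *\<^sub>C w) (v - c *\<^sub>C w) = cinner v v - cinner (c *\<^sub>C w) v - (cinner v (c *\<^sub>C w) - cinner (c *\<^sub>C w) (c *\<^sub>C w))"
    by (simp only: cinner_diff_left cinner_diff_right)
  also have "\<dots> = cinner v v - c * cinner w v - (cnj c * cinner v w - cnj c * (c * cinner w w))"
    by (simp only: cinner_scaleC_left cinner_scaleC_right)
  finally show ?thesis by (simp add: algebra_simps)
qed

lemma parallelogram: "(norm (a + b))\<^sup>2 + (norm (a - b))\<^sup>2 = 2 * (norm a)\<^sup>2 + 2 * (norm (b::'a::complex_inner))\<^sup>2"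
proof -
  have eq: "cinner (a + b) (a + b) + cinner (a - b) (a - b) = 2 * cinner a a + 2 * cinner b b"
    by (simp only: cinner_add_left cinner_add_right cinner_diff_left cinner_diff_right) (simp add: algebra_simps)
  have "Re (cinner (a + b) (a + b)) + Re (cinner (a - b) (a - b)) = 2 * Re (cinner a a) + 2 * Re (cinner b b)"
    using arg_cong[OF eq, of Re] by simp
  then show ?thesis by (simp only: norm_sq_cinner)
qed




lemma orth_of_min:
  fixes v :: "'a::complex_inner"
  assumes min: "\<And>m. m \<in> N \<Longrightarrow> norm v \<le> norm (v - m)"
    and sc: "\<And>c m. m \<in> N \<Longrightarrow> c *\<^sub>C m \<in> N"
    and m: "m \<in> N"
  shows "cinner v m = 0"
proof -
  define a where "a = cinner v m"
  define M where "M = (norm m)\<^sup>2"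
  define e where "e = 1 / (M + 1)"
  have M0: "M \<ge> 0" by (simp add: M_def)
  have e0: "e > 0" using M0 by (simp add: e_def)
  have eM: "e * M < 1" using M0 by (simp add: e_def)
  define A where "A = (cmod a)\<^sup>2"
  have A0: "A \<ge> 0" by (simp add: A_def)
  define t where "t = complex_of_real e * a"
  have aa: "cnj a * a = complex_of_real A" by (simp add: A_def complex_mult_cnj cmod_def mult.commute)
  have mv: "cinner m v = cnj a" unfolding a_def by (rule cinner_commute)
  have g1: "cnj t * a = complex_of_real (e * A)" using aa by (simp add: t_def)
  have g2: "t * cnj a = complex_of_real (e * A)" using aa by (simp add: t_def mult.commute mult.left_commute)
  have g3: "cnj t * (t * cinner m m) = complex_of_real (e * e * A * M)"
    using aa by (simp add: t_def cinner_self_norm M_def mult.commute mult.left_commute)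
  have "cinner (v - t *\<^sub>C m) (v - t *\<^sub>C m) = cinner v v - cnj t * a - t * cnj a + cnj t * (t * cinner m m)"
    by (simp only: cinner_expand a_def[symmetric] mv)
  also have "\<dots> = complex_of_real ((norm v)\<^sup>2 - e * A - e * A + e * e * A * M)"
    unfolding g1 g2 g3 by (simp only: cinner_self_norm of_real_add of_real_diff)
  finally have "(norm (v - t *\<^sub>C m))\<^sup>2 = (norm v)\<^sup>2 - e * A - e * A + e * e * A * M"
    by (simp only: cinner_self_norm of_real_eq_iff)
  moreover have "(norm v)\<^sup>2 \<le> (norm (v - t *\<^sub>C m))\<^sup>2"
    by (rule power_mono[OF min[OF sc[OF m]] norm_ge_zero])
  moreover have "e * (A * (e * M - 2)) = e * e * A * M - e * A - e * A" by (simp add: algebra_simps)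
  ultimately have "0 \<le> e * (A * (e * M - 2))" by linarith
  then have "0 \<le> A * (e * M - 2)" using e0 by (simp add: zero_le_mult_iff)
  then have "A \<le> 0" using eM A0 by (simp add: zero_le_mult_iff)
  then have "A = 0" using A0 by simp
  then show ?thesis by (simp add: A_def a_def)
qed




lemma proj_exists:
  fixes N :: "'a::chilbert_space set" and u :: 'a
  assumes cl: "closed N" and z: "0 \<in> N" and ad: "\<And>x y. x\<in>N \<Longrightarrow> y\<in>N \<Longrightarrow> x + y \<in> N"
    and sc: "\<And>c x. x \<in> N \<Longrightarrow> c *\<^sub>C x \<in> N"
  shows "\<exists>n0\<in>N. \<forall>n\<in>N. norm (u - n0) \<le> norm (u - n)"
proof -
  define D where "D = (\<lambda>n. norm (u - n)) ` N"
  define d where "d = Inf D"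
  have Dne: "D \<noteq> {}" using z by (auto simp: D_def)
  have bdd: "bdd_below D" unfolding D_def by (rule bdd_belowI[of _ 0]) auto
  have dle: "\<And>n. n \<in> N \<Longrightarrow> d \<le> norm (u - n)"
    unfolding d_def by (rule cInf_lower[OF _ bdd]) (auto simp: D_def)
  have d0: "0 \<le> d" unfolding d_def by (rule cInf_greatest[OF Dne]) (auto simp: D_def)
  have ex: "\<exists>n. n \<in> N \<and> (norm (u - n))\<^sup>2 < d\<^sup>2 + 1 / real (Suc k)" for k
  proof -
    define s where "s = sqrt (d\<^sup>2 + 1 / real (Suc k))"
    have "sqrt (d\<^sup>2) < s" unfolding s_def by (rule real_sqrt_less_mono) simp
    then have "d < s" using d0 by simp
    then obtain y where "y \<in> D" "y < s" using cInf_lessD[OF Dne] by (auto simp: d_def)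
    then obtain n where n: "n \<in> N" "norm (u - n) < s" by (auto simp: D_def)
    have "(norm (u - n))\<^sup>2 < s\<^sup>2" by (rule power_strict_mono[OF n(2)]) auto
    also have "s\<^sup>2 = d\<^sup>2 + 1 / real (Suc k)" unfolding s_def by (rule real_sqrt_pow2) simp
    finally show ?thesis using n(1) by blast
  qed
  then have "\<forall>k. \<exists>n. n \<in> N \<and> (norm (u - n))\<^sup>2 < d\<^sup>2 + 1 / real (Suc k)" by blast
  then obtain nk where nk: "\<And>k. nk k \<in> N" "\<And>k. (norm (u - nk k))\<^sup>2 < d\<^sup>2 + 1 / real (Suc k)"
    by metis
  have cd: "(norm (nk j - nk k))\<^sup>2 \<le> 2 / real (Suc j) + 2 / real (Suc k)" for j k
  proof -
    define a where "a = u - nk j"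
    define b where "b = u - nk k"
    define mid where "mid = scaleR (1/2) (nk j + nk k)"
    have mid: "mid \<in> N" unfolding mid_def scaleR_scaleC using sc ad nk(1) by blast
    have "a + b = scaleR 2 (u - mid)" unfolding a_def b_def mid_def
      by (simp add: algebra_simps scaleR_2)
    then have "norm (a + b) = 2 * norm (u - mid)" by simp
    moreover have "d \<le> norm (u - mid)" by (rule dle[OF mid])
    ultimately have "2 * d \<le> norm (a + b)" by simp
    then have s1: "(2 * d)\<^sup>2 \<le> (norm (a + b))\<^sup>2" by (rule power_mono) (simp add: d0)
    have s2: "norm (nk j - nk k) = norm (a - b)" unfolding a_def b_def by (simp add: norm_minus_commute)
    have p: "(norm (a + b))\<^sup>2 + (norm (a - b))\<^sup>2 = 2 * (norm a)\<^sup>2 + 2 * (norm b)\<^sup>2" by (rule parallelogram)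
    have "(2 * d)\<^sup>2 = 4 * d\<^sup>2" by (simp add: power2_eq_square)
    moreover have "2 / real (Suc j) = 2 * (1 / real (Suc j))" "2 / real (Suc k) = 2 * (1 / real (Suc k))" by simp_all
    moreover have "(norm (nk j - nk k))\<^sup>2 = (norm (a - b))\<^sup>2" using s2 by simp
    ultimately show ?thesis using s1 s2 p nk(2)[of j] nk(2)[of k] unfolding a_def[symmetric] b_def[symmetric]
      by linarith
  qed
  have "Cauchy nk"
  proof (rule CauchyI)
    fix e :: real assume e: "0 < e"
    obtain M :: nat where M: "4 / e\<^sup>2 < real M" using reals_Archimedean2 by blast
    show "\<exists>M. \<forall>m\<ge>M. \<forall>n\<ge>M. norm (nk m - nk n) < e"
    proof (intro exI allI impI)
      fix m n assume mM: "M \<le> m" "M \<le> n"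
      have h1: "2 / real (Suc m) \<le> 2 / real (Suc M)" using mM by (intro divide_left_mono) auto
      have h2: "2 / real (Suc n) \<le> 2 / real (Suc M)" using mM by (intro divide_left_mono) auto
      have "4 < e\<^sup>2 * real M" using M e by (simp add: field_simps)
      moreover have "0 \<le> e\<^sup>2" by simp
      moreover have "e\<^sup>2 * real (Suc M) = e\<^sup>2 + e\<^sup>2 * real M" by (simp add: algebra_simps)
      ultimately have "4 < e\<^sup>2 * real (Suc M)" by linarith
      then have h3: "4 / real (Suc M) < e\<^sup>2" by (simp add: field_simps)
      have "(norm (nk m - nk n))\<^sup>2 < e\<^sup>2" using cd[of m n] h1 h2 h3 by linarith
      then show "norm (nk m - nk n) < e" using e by (meson power_less_imp_less_base less_imp_le)
    qed
  qed
  then obtain n0 where lim: "nk \<longlonglongrightarrow> n0" using Cauchy_convergent convergent_def by blast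
  have n0N: "n0 \<in> N" by (rule closed_sequentially[OF cl nk(1) lim])
  have "(norm (u - n0))\<^sup>2 \<le> d\<^sup>2"
  proof (rule LIMSEQ_le)
    show "(\<lambda>k. (norm (u - nk k))\<^sup>2) \<longlonglongrightarrow> (norm (u - n0))\<^sup>2" by (intro tendsto_intros lim)
    show "(\<lambda>k. d\<^sup>2 + inverse (real (Suc k))) \<longlonglongrightarrow> d\<^sup>2" by (rule LIMSEQ_inverse_real_of_nat_add)
    show "\<exists>N. \<forall>n\<ge>N. (norm (u - nk n))\<^sup>2 \<le> d\<^sup>2 + inverse (real (Suc n))"
      using nk(2) by (metis inverse_eq_divide less_imp_le)
  qed
  then have "norm (u - n0) \<le> d" using d0 by (rule power2_le_imp_le)
  then show ?thesis using n0N dle by (meson order_trans)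
qed




lemma riesz:
  fixes f :: "'a::chilbert_space \<Rightarrow> complex"
  assumes f: "bounded_clinear f"
  shows "\<exists>s. \<forall>h. f h = cinner h s"
proof (cases "\<forall>h. f h = 0")
  case True then show ?thesis by (intro exI[of _ 0]) simp
next
  case False
  then obtain u where fu: "f u \<noteq> 0" by blast
  define N where "N = f -` {0}"
  have cl: "closed N" unfolding N_def
    by (rule closed_vimage[OF closed_singleton linear_continuous_on[OF bcl_bl[OF f]]])
  have z: "0 \<in> N" by (simp add: N_def bcl_zero[OF f])
  have ad: "x + y \<in> N" if "x \<in> N" "y \<in> N" for x y using that by (simp add: N_def bcl_add[OF f])
  have sc: "c *\<^sub>C x \<in> N" if "x \<in> N" for c x using that by (simp add: N_def bcl_scale[OF f] scaleC_complex_def)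
  obtain n0 where n0: "n0 \<in> N" "\<And>n. n \<in> N \<Longrightarrow> norm (u - n0) \<le> norm (u - n)"
    using proj_exists[OF cl z ad sc, of u] by blast
  define v where "v = u - n0"
  have min: "norm v \<le> norm (v - m)" if "m \<in> N" for m
  proof -
    have "v - m = u - (n0 + m)" by (simp add: v_def algebra_simps)
    show ?thesis using n0(2)[OF ad[OF n0(1) that]] unfolding v_def diff_diff_eq .
  qed
  have orth: "cinner v m = 0" if "m \<in> N" for m by (rule orth_of_min[OF min sc that])
  have fv: "f v = f u" using n0(1) by (simp add: v_def bcl_diff[OF f] N_def)
  have "v \<noteq> 0" using fv fu bcl_zero[OF f] by auto
  then have vv: "cinner v v \<noteq> 0" by (simp add: cinner_eq_zero_iff)
  define s where "s = cnj (f v / cinner v v) *\<^sub>C v"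
  show ?thesis
  proof (intro exI allI)
    fix y
    define c where "c = f y / f v"
    have "f (y - c *\<^sub>C v) = 0" using fv fu
      by (simp add: bcl_diff[OF f] bcl_scale[OF f] scaleC_complex_def c_def)
    then have yN: "y - c *\<^sub>C v \<in> N" by (simp add: N_def)
    have "cinner (y - c *\<^sub>C v) v = cnj (cinner v (y - c *\<^sub>C v))" by (rule cinner_commute)
    also have "\<dots> = 0" using orth[OF yN] by simp
    finally have "cinner y v = c * cinner v v"
      by (simp add: cinner_diff_left cinner_scaleC_left)
    then have "cinner y s = f v / cinner v v * (c * cinner v v)"
      by (simp add: s_def cinner_scaleC_right)
    also have "\<dots> = f y" using vv fv fu by (simp add: c_def)
    finally show "f y = cinner y s" by simp
  qed
qed

lemma adjoint_exists:
  fixes F :: "'a::chilbert_space \<Rightarrow> 'b::complex_inner"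
  assumes F: "bounded_clinear F"
  shows "\<exists>S. bounded_clinear S \<and> (\<forall>h k. cinner (F h) k = cinner h (S k))"
proof -
  obtain K where K: "\<And>x. norm (F x) \<le> norm x * K" using F unfolding bounded_clinear_def by blast
  define K1 where "K1 = max K 0"
  have K1: "norm (F x) \<le> norm x * K1" for x
    using K[of x] by (smt (verit) K1_def mult_left_mono norm_ge_zero)
  have K10: "K1 \<ge> 0" by (simp add: K1_def)
  have "\<exists>s. \<forall>h. cinner (F h) k = cinner h s" for k
  proof (rule riesz)
    show "bounded_clinear (\<lambda>h. cinner (F h) k)"
      unfolding bounded_clinear_def
    proof (intro conjI allI exI)
      show "cinner (F (x + y)) k = cinner (F x) k + cinner (F y) k" for x y
        by (simp add: bcl_add[OF F] cinner_add_left)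
      show "cinner (F (c *\<^sub>C x)) k = c *\<^sub>C cinner (F x) k" for c x
        by (simp add: bcl_scale[OF F] cinner_scaleC_left scaleC_complex_def)
      show "norm (cinner (F x) k) \<le> norm x * (K1 * norm k)" for x
      proof -
        have "norm (cinner (F x) k) \<le> norm (F x) * norm k" by (rule cauchy_schwarz)
        also have "\<dots> \<le> norm x * K1 * norm k" by (rule mult_right_mono[OF K1 norm_ge_zero])
        finally show ?thesis by (simp add: mult.assoc)
      qed
    qed
  qed
  then have "\<forall>k. \<exists>s. \<forall>h. cinner (F h) k = cinner h s" by blast
  then obtain S where S: "\<And>h k. cinner (F h) k = cinner h (S k)" by metis
  have "bounded_clinear S"
    unfolding bounded_clinear_def
  proof (intro conjI allI exI)
    show "S (x + y) = S x + S y" for x y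
      by (rule cinner_ext) (simp add: S[symmetric] cinner_add_right)
    show "S (c *\<^sub>C x) = c *\<^sub>C S x" for c x
      by (rule cinner_ext) (simp add: S[symmetric] cinner_scaleC_right)
    show "norm (S k) \<le> norm k * K1" for k
    proof (cases "S k = 0")
      case True then show ?thesis using K10 by simp
    next
      case False
      have "(norm (S k))\<^sup>2 = Re (cinner (S k) (S k))" by (rule norm_sq_cinner)
      also have "\<dots> = Re (cinner (F (S k)) k)" by (simp add: S)
      also have "\<dots> \<le> cmod (cinner (F (S k)) k)" by (rule complex_Re_le_cmod)
      also have "\<dots> \<le> norm (F (S k)) * norm k" by (rule cauchy_schwarz)
      also have "\<dots> \<le> norm (S k) * K1 * norm k" by (rule mult_right_mono[OF K1 norm_ge_zero])
      finally have "norm (S k) * norm (S k) \<le> norm (S k) * (norm k * K1)"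
        by (simp add: power2_eq_square algebra_simps)
      then show ?thesis using False by simp
    qed
  qed
  then show ?thesis using S by blast
qed




lemma bcl_compose: "bounded_clinear f \<Longrightarrow> bounded_clinear g \<Longrightarrow> bounded_clinear (\<lambda>x. f (g x))"
proof -
  assume f: "bounded_clinear f" and g: "bounded_clinear g"
  obtain K where K: "\<And>x. norm (f x) \<le> norm x * K" using f unfolding bounded_clinear_def by blast
  obtain L where L: "\<And>x. norm (g x) \<le> norm x * L" using g unfolding bounded_clinear_def by blast
  define K1 where "K1 = max K 0"
  have K1: "norm (f x) \<le> norm x * K1" for x
    using K[of x] by (smt (verit) K1_def mult_left_mono norm_ge_zero)
  have "norm (f (g x)) \<le> norm x * (L * K1)" for x
  proof -
    have "norm (f (g x)) \<le> norm (g x) * K1" by (rule K1)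
    also have "\<dots> \<le> norm x * L * K1" by (rule mult_right_mono[OF L]) (simp add: K1_def)
    finally show ?thesis by (simp add: mult.assoc)
  qed
  then show ?thesis unfolding bounded_clinear_def
    using f g by (auto simp: bcl_add bcl_scale)
qed

lemma kadj_eq:
  assumes "\<And>h k. ind J (X h) k = cinner h (S k)"
  shows "kadj J X = S"
  unfolding kadj_def
proof (rule the_equality)
  show "\<forall>h k. ind J (X h) k = cinner h (S k)" using assms by blast
  fix S' assume S': "\<forall>h k. ind J (X h) k = cinner h (S' k)"
  show "S' = S"
  proof
    fix k show "S' k = S k" by (rule cinner_ext) (use S' assms in metis)
  qed
qed

context
  fixes J :: "'k::chilbert_space \<Rightarrow> 'k"
  assumes J: "pontryagin_symmetry J"
begin

lemma J_bcl: "bounded_clinear J" using J unfolding pontryagin_symmetry_def by blast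
lemma JJ: "J (J x) = x" using J unfolding pontryagin_symmetry_def by blast
lemma Jsa: "cinner (J x) y = cinner x (J y)" using J unfolding pontryagin_symmetry_def by blast

lemma ind_add_right: "ind J x (y + z) = ind J x y + ind J x z"
  by (simp add: ind_def cinner_add_right)
lemma ind_scale_right: "ind J x (c *\<^sub>C y) = cnj c * ind J x y"
  by (simp add: ind_def cinner_scaleC_right)
lemma ind_add_left: "ind J (x + y) z = ind J x z + ind J y z"
  by (simp add: ind_def bcl_add[OF J_bcl] cinner_add_left)
lemma ind_scale_left: "ind J (c *\<^sub>C x) y = c * ind J x y"
  by (simp add: ind_def bcl_scale[OF J_bcl] cinner_scaleC_left)
lemma ind_nondeg: "(\<And>y. ind J y e = 0) \<Longrightarrow> e = 0"
proof -
  assume "\<And>y. ind J y e = 0"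
  then have "ind J (J e) e = 0" .
  then have "cinner e e = 0" by (simp add: ind_def JJ)
  then show ?thesis by (simp add: cinner_eq_zero_iff)
qed

end




context
  fixes J :: "'k::chilbert_space \<Rightarrow> 'k" and A :: "('k \<times> 'k) set"
  assumes J: "pontryagin_symmetry J" and A_sa: "selfadjoint_rel J A"
begin

lemma A_sym: "(u, v) \<in> A \<Longrightarrow> (f, g) \<in> A \<Longrightarrow> ind J v f = ind J u g"
proof -
  assume uv: "(u, v) \<in> A" and fg: "(f, g) \<in> A"
  from fg A_sa have "(f, g) \<in> rel_adjoint J A" unfolding selfadjoint_rel_def by simp
  then show ?thesis using uv unfolding rel_adjoint_def by auto
qed

lemma A_mem: "(\<And>u v. (u, v) \<in> A \<Longrightarrow> ind J v f = ind J u g) \<Longrightarrow> (f, g) \<in> A"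
proof -
  assume "\<And>u v. (u, v) \<in> A \<Longrightarrow> ind J v f = ind J u g"
  then have "(f, g) \<in> rel_adjoint J A" unfolding rel_adjoint_def by auto
  then show ?thesis using A_sa unfolding selfadjoint_rel_def by simp
qed

lemma A_add: assumes fg: "(f, g) \<in> A" and fg': "(f', g') \<in> A" shows "(f + f', g + g') \<in> A"
proof (rule A_mem)
  fix u v assume uv: "(u, v) \<in> A"
  show "ind J v (f + f') = ind J u (g + g')"
    unfolding ind_add_right[OF J] A_sym[OF uv fg] A_sym[OF uv fg'] ..
qed

lemma A_scale: assumes fg: "(f, g) \<in> A" shows "(c *\<^sub>C f, c *\<^sub>C g) \<in> A"
proof (rule A_mem)
  fix u v assume uv: "(u, v) \<in> A"
  show "ind J v (c *\<^sub>C f) = ind J u (c *\<^sub>C g)"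
    unfolding ind_scale_right[OF J] A_sym[OF uv fg] ..
qed

lemma A_zero: "(0, 0) \<in> A"
  by (rule A_mem) (simp add: ind_def)

lemma A_sum: "finite S \<Longrightarrow> (\<And>i. i \<in> S \<Longrightarrow> (a i, b i) \<in> A) \<Longrightarrow> (sum a S, sum b S) \<in> A"
  by (induction S rule: finite_induct) (auto intro: A_zero A_add)

lemma res_char:
  assumes w: "w \<in> resolvent_set A"
  shows "bounded_clinear (resolvent A w)"
    and "\<And>y x. (y, x) \<in> shifted_inverse A w \<longleftrightarrow> x = resolvent A w y"
proof -
  obtain R where R: "bounded_clinear R" "\<And>y x. (y, x) \<in> shifted_inverse A w \<longleftrightarrow> x = R y"
    using w unfolding resolvent_set_def by blast
  have "resolvent A w = R" unfolding resolvent_def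
  proof (rule the_equality)
    show "\<forall>y x. (y, x) \<in> shifted_inverse A w \<longleftrightarrow> x = R y" using R by blast
    fix R' assume R': "\<forall>y x. (y, x) \<in> shifted_inverse A w \<longleftrightarrow> x = R' y"
    show "R' = R"
    proof
      fix y have "(y, R y) \<in> shifted_inverse A w" using R by blast
      then show "R' y = R y" using R' by simp
    qed
  qed
  then show "bounded_clinear (resolvent A w)"
    and "\<And>y x. (y, x) \<in> shifted_inverse A w \<longleftrightarrow> x = resolvent A w y" using R by auto
qed

lemma res_in:
  assumes w: "w \<in> resolvent_set A"
  shows "(resolvent A w y, y + w *\<^sub>C resolvent A w y) \<in> A"
proof -
  have "(y, resolvent A w y) \<in> shifted_inverse A w" using res_char(2)[OF w] by blast
  then obtain f g where fg: "y = g - w *\<^sub>C f" "resolvent A w y = f" "(f, g) \<in> A"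
    unfolding shifted_inverse_def by blast
  have "g = y + w *\<^sub>C f" using fg(1) by simp
  then show ?thesis using fg by simp
qed

lemma res_app:
  assumes w: "w \<in> resolvent_set A" and fg: "(f, g) \<in> A"
  shows "resolvent A w (g - w *\<^sub>C f) = f"
proof -
  have "(g - w *\<^sub>C f, f) \<in> shifted_inverse A w" unfolding shifted_inverse_def using fg by blast
  then show ?thesis using res_char(2)[OF w] by simp
qed


lemma res_conj:
  assumes w: "w \<in> resolvent_set A"
  shows "cnj w \<in> resolvent_set A"
proof -
  let ?R = "resolvent A w"
  have Rb: "bounded_clinear ?R" by (rule res_char(1)[OF w])
  obtain S where S: "bounded_clinear S" "\<And>h k. cinner (?R h) k = cinner h (S k)"
    using adjoint_exists[OF Rb] by blast
  define T where "T = (\<lambda>y. J (S (J y)))"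
  have Tb: "bounded_clinear T" unfolding T_def
    by (rule bcl_compose[OF J_bcl[OF J] bcl_compose[OF S(1) J_bcl[OF J]]])
  have Tadj: "ind J a (T y) = ind J (?R a) y" for a y
  proof -
    have "ind J a (T y) = cinner (J a) (J (S (J y)))" by (simp add: ind_def T_def)
    also have "\<dots> = cinner (J (J a)) (S (J y))" by (simp add: Jsa[OF J])
    also have "\<dots> = cinner a (S (J y))" by (simp add: JJ[OF J])
    also have "\<dots> = cinner (?R a) (J y)" by (simp add: S(2))
    also have "\<dots> = ind J (?R a) y" by (simp add: ind_def Jsa[OF J])
    finally show ?thesis .
  qed
  have Tin: "(T y, y + cnj w *\<^sub>C T y) \<in> A" for y
  proof (rule A_mem)
    fix u v assume uv: "(u, v) \<in> A"
    have u: "?R (v - w *\<^sub>C u) = u" by (rule res_app[OF w uv])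
    have "ind J v (T y) = ind J (v - w *\<^sub>C u) (T y) + w * ind J u (T y)"
      using ind_add_left[OF J, of "v - w *\<^sub>C u" "w *\<^sub>C u" "T y"] ind_scale_left[OF J, of w u "T y"] by simp
    also have "\<dots> = ind J u y + w * ind J u (T y)" using Tadj[of "v - w *\<^sub>C u" y] u by simp
    also have "\<dots> = ind J u (y + cnj w *\<^sub>C T y)" by (simp add: ind_add_right[OF J] ind_scale_right[OF J])
    finally show "ind J v (T y) = ind J u (y + cnj w *\<^sub>C T y)" .
  qed
  have ker: "e = 0" if e: "(e, cnj w *\<^sub>C e) \<in> A" for e
  proof (rule ind_nondeg[OF J])
    fix y
    have i: "(?R y, y + w *\<^sub>C ?R y) \<in> A" by (rule res_in[OF w])
    have "ind J (y + w *\<^sub>C ?R y) e = ind J (?R y) (cnj w *\<^sub>C e)" by (rule A_sym[OF i e])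
    moreover have "ind J (y + w *\<^sub>C ?R y) e = ind J y e + w * ind J (?R y) e"
      by (simp only: ind_add_left[OF J] ind_scale_left[OF J])
    moreover have "ind J (?R y) (cnj w *\<^sub>C e) = w * ind J (?R y) e"
      by (simp only: ind_scale_right[OF J] complex_cnj_cnj)
    ultimately have "ind J y e + w * ind J (?R y) e = 0 + w * ind J (?R y) e"
      by (simp only: add_0_left)
    then show "ind J y e = 0" by (rule add_right_imp_eq)
  qed
  have "\<forall>y x. (y, x) \<in> shifted_inverse A (cnj w) \<longleftrightarrow> x = T y"
  proof (intro allI iffI)
    fix y x assume "(y, x) \<in> shifted_inverse A (cnj w)"
    then obtain f g where fg: "y = g - cnj w *\<^sub>C f" "x = f" "(f, g) \<in> A"
      unfolding shifted_inverse_def by blast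
    have "(f - T y, g - (y + cnj w *\<^sub>C T y)) \<in> A"
      using A_add[OF fg(3) A_scale[OF Tin[of y], of "-1"]] by (simp add: cvs.scale_minus_left) (simp add: algebra_simps)
    moreover have "g - (y + cnj w *\<^sub>C T y) = cnj w *\<^sub>C (f - T y)"
      using fg(1) by (simp add: cvs.scale_right_diff_distrib)
    ultimately have "(f - T y, cnj w *\<^sub>C (f - T y)) \<in> A" by simp
    then have "f - T y = 0" by (rule ker)
    then show "x = T y" using fg(2) by simp
  next
    fix y x assume "x = T y"
    moreover have "y = (y + cnj w *\<^sub>C T y) - cnj w *\<^sub>C T y" by simp
    ultimately show "(y, x) \<in> shifted_inverse A (cnj w)"
      unfolding shifted_inverse_def using Tin[of y] by blast
  qed
  then show ?thesis unfolding resolvent_set_def using Tb by blast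
qed

lemma res_adj:
  assumes w: "w \<in> resolvent_set A"
  shows "ind J (resolvent A (cnj w) b) a = ind J b (resolvent A w a)"
proof -
  have wc: "cnj w \<in> resolvent_set A" by (rule res_conj[OF w])
  let ?R = "resolvent A w" and ?Rc = "resolvent A (cnj w)"
  have i1: "(?Rc b, b + cnj w *\<^sub>C ?Rc b) \<in> A" by (rule res_in[OF wc])
  have i2: "(?R a, a + w *\<^sub>C ?R a) \<in> A" by (rule res_in[OF w])
  have "ind J (b + cnj w *\<^sub>C ?Rc b) (?R a) = ind J (?Rc b) (a + w *\<^sub>C ?R a)" by (rule A_sym[OF i1 i2])
  then have "ind J b (?R a) + cnj w * ind J (?Rc b) (?R a) = ind J (?Rc b) a + cnj w * ind J (?Rc b) (?R a)"
    by (simp only: ind_add_left[OF J] ind_scale_left[OF J] ind_add_right[OF J] ind_scale_right[OF J])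
  then show ?thesis by (rule add_right_imp_eq[symmetric])
qed

end




lemma norm_scaleC: "norm (c *\<^sub>C x) = cmod c * norm (x::'a::complex_inner)"
proof -
  have "(norm (c *\<^sub>C x))\<^sup>2 = Re (cnj c * (c * cinner x x))"
    by (simp only: norm_sq_cinner cinner_scaleC_left cinner_scaleC_right)
  also have "cnj c * (c * cinner x x) = complex_of_real ((cmod c)\<^sup>2 * (norm x)\<^sup>2)"
  proof -
    have "cnj c * (c * cinner x x) = (c * cnj c) * cinner x x" by (simp only: mult.assoc mult.left_commute)
    also have "\<dots> = complex_of_real ((cmod c)\<^sup>2) * complex_of_real ((norm x)\<^sup>2)"
      by (simp only: complex_norm_square cinner_self_norm)
    finally show ?thesis by simp
  qed
  finally have "(norm (c *\<^sub>C x))\<^sup>2 = (cmod c * norm x)\<^sup>2" by (simp add: power_mult_distrib)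
  then show ?thesis by (simp add: power2_eq_iff_nonneg)
qed

lemma bcl_plus: "bounded_clinear f \<Longrightarrow> bounded_clinear g \<Longrightarrow> bounded_clinear (\<lambda>x. f x + g x)"
proof -
  assume f: "bounded_clinear f" and g: "bounded_clinear g"
  obtain K where K: "\<And>x. norm (f x) \<le> norm x * K" using f unfolding bounded_clinear_def by blast
  obtain L where L: "\<And>x. norm (g x) \<le> norm x * L" using g unfolding bounded_clinear_def by blast
  have "norm (f x + g x) \<le> norm x * (K + L)" for x
    using norm_triangle_ineq[of "f x" "g x"] K[of x] L[of x] by (simp add: algebra_simps)
  then show ?thesis unfolding bounded_clinear_def
    using f g by (auto simp: bcl_add bcl_scale cvs.scale_right_distrib)
qed

lemma bcl_cscale: "bounded_clinear f \<Longrightarrow> bounded_clinear (\<lambda>x. c *\<^sub>C f x)"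
proof -
  assume f: "bounded_clinear f"
  obtain K where K: "\<And>x. norm (f x) \<le> norm x * K" using f unfolding bounded_clinear_def by blast
  show ?thesis unfolding bounded_clinear_def
  proof (intro conjI allI exI)
    show "norm (c *\<^sub>C f x) \<le> norm x * (cmod c * K)" for x
      using mult_left_mono[OF K[of x], of "cmod c"] by (simp add: norm_scaleC algebra_simps)
    show "c *\<^sub>C f (x + y) = c *\<^sub>C f x + c *\<^sub>C f y" for x y by (simp add: bcl_add[OF f] cvs.scale_right_distrib)
    show "c *\<^sub>C f (a *\<^sub>C x) = a *\<^sub>C c *\<^sub>C f x" for a x by (simp add: bcl_scale[OF f] mult.commute)
  qed
qed





lemma jordan_sum:
  fixes J :: "'k::chilbert_space \<Rightarrow> 'k" and A :: "('k \<times> 'k) set"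
  assumes J: "pontryagin_symmetry J" and A_sa: "selfadjoint_rel J A"
    and ch: "jordan_chain A a l x"
  shows "((\<Sum>j<l. t ^ j *\<^sub>C x j), (a + t) *\<^sub>C (\<Sum>j<l. t ^ j *\<^sub>C x j) - t ^ l *\<^sub>C x (l - 1)) \<in> A"
proof -
  have l: "1 \<le> l" and x0: "(x 0, a *\<^sub>C x 0) \<in> A"
    and xj: "\<And>j. 1 \<le> j \<Longrightarrow> j < l \<Longrightarrow> (x j, a *\<^sub>C x j + x (j - 1)) \<in> A"
    using ch unfolding jordan_chain_def by auto
  define xi where "xi = (\<lambda>n. \<Sum>j<n. t ^ j *\<^sub>C x j)"
  have step: "m < l \<Longrightarrow> (xi (Suc m), (a + t) *\<^sub>C xi (Suc m) - t ^ Suc m *\<^sub>C x m) \<in> A" for m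
  proof (induction m)
    case 0
    have "xi (Suc 0) = x 0" by (simp add: xi_def)
    moreover have "(a + t) *\<^sub>C x 0 - t ^ Suc 0 *\<^sub>C x 0 = a *\<^sub>C x 0" by (simp add: algebra_simps)
    ultimately show ?case using x0 by simp
  next
    case (Suc m)
    then have IH: "(xi (Suc m), (a + t) *\<^sub>C xi (Suc m) - t ^ Suc m *\<^sub>C x m) \<in> A" by simp
    have c: "(x (Suc m), a *\<^sub>C x (Suc m) + x m) \<in> A" using xj[of "Suc m"] Suc.prems by simp
    have s: "(xi (Suc m) + t ^ Suc m *\<^sub>C x (Suc m),
        ((a + t) *\<^sub>C xi (Suc m) - t ^ Suc m *\<^sub>C x m) + t ^ Suc m *\<^sub>C (a *\<^sub>C x (Suc m) + x m)) \<in> A"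
      by (rule A_add[OF J A_sa IH A_scale[OF J A_sa c]])
    have e1: "xi (Suc (Suc m)) = xi (Suc m) + t ^ Suc m *\<^sub>C x (Suc m)" by (simp add: xi_def)
    have e2: "(a + t) *\<^sub>C xi (Suc (Suc m)) - t ^ Suc (Suc m) *\<^sub>C x (Suc m)
        = ((a + t) *\<^sub>C xi (Suc m) - t ^ Suc m *\<^sub>C x m) + t ^ Suc m *\<^sub>C (a *\<^sub>C x (Suc m) + x m)"
      unfolding e1 by (simp add: algebra_simps)
    show ?case using s unfolding e1[symmetric] e2[symmetric] by simp
  qed
  have "l - 1 < l" "Suc (l - 1) = l" using l by auto
  then show ?thesis using step[of "l - 1"] by (simp add: xi_def)
qed




theorem lemma3p9:
  fixes J :: "'k::chilbert_space \<Rightarrow> 'k"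
    and A Ahat :: "('k \<times> 'k) set"
    and G :: "'h::chilbert_space \<Rightarrow> 'k"
    and Q :: "complex \<Rightarrow> 'h \<Rightarrow> 'h"
    and z0 z :: complex and \<alpha> :: real and l :: nat and x :: "nat \<Rightarrow> 'k"
  assumes J: "pontryagin_symmetry J"
    and A_sa: "selfadjoint_rel J A"
    and z0: "z0 \<in> resolvent_set A" "Im z0 > 0"
    and G: "bounded_clinear G"
    and Q_real: "\<forall>w\<in>resolvent_set A.
        Q w = (\<lambda>h. hadj (Q z0) h + (w - cnj z0) *\<^sub>C kadj J G (Gamma_z A z0 G w h))"
    and Qz0: "bdd_invertible (Q z0)"
    and Ahat: "\<forall>w\<in>resolvent_set A. bdd_invertible (Q w) \<longrightarrow>
        w \<in> resolvent_set Ahat \<and>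
        resolvent Ahat w = (\<lambda>k. resolvent A w k
            + Gamma_z A z0 G w (- inv (Q w) (kadj J (Gamma_z A z0 G (cnj w)) k)))"
    and chain: "jordan_chain A (complex_of_real \<alpha>) l x"
    and z: "z \<in> resolvent_set A" "z \<in> resolvent_set Ahat" "bdd_invertible (Q z)"
    and z_ne: "z \<noteq> cnj z0"
  shows "(let Ghat = (\<lambda>h. - G (inv (Q z0) h));
              xz = (\<Sum>j<l. (z - complex_of_real \<alpha>) ^ j *\<^sub>C x j);
              w = resolvent A (cnj z0) (x (l - 1))
          in Gamma_z Ahat z0 Ghat z (kadj J G xz)
             = (- 1 / (z - cnj z0)) *\<^sub>C
                 (xz + (z - complex_of_real \<alpha>) ^ l *\<^sub>C (w + (z - cnj z0) *\<^sub>C resolvent Ahat z w)))"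
proof -
  have z0c: "cnj z0 \<in> resolvent_set A" by (rule res_conj[OF J A_sa z0(1)])
  have zc: "cnj z \<in> resolvent_set A" by (rule res_conj[OF J A_sa z(1)])
  define R where "R = resolvent A z"
  define R0 where "R0 = resolvent A (cnj z0)"
  define Rh where "Rh = resolvent Ahat z"
  have Rb: "bounded_clinear R" unfolding R_def by (rule res_char(1)[OF J A_sa z(1)])
  obtain P0 where P0: "bounded_clinear P0" "\<And>h k. cinner (J (G h)) k = cinner h (P0 k)"
    using adjoint_exists[OF bcl_compose[OF J_bcl[OF J] G]] by blast
  define P where "P = kadj J G"
  have PP0: "P = P0" unfolding P_def by (rule kadj_eq) (simp add: ind_def P0(2))
  have Pb: "bounded_clinear P" using PP0 P0(1) by simp
  have Pind: "ind J (G h) k = cinner h (P k)" for h k by (simp add: ind_def PP0 P0(2))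
  define Gz where "Gz = Gamma_z A z0 G z"
  have Gz_eq: "Gz = (\<lambda>h. G h + (z - z0) *\<^sub>C R (G h))" unfolding Gz_def Gamma_z_def R_def ..
  have Gzb: "bounded_clinear Gz" unfolding Gz_eq
    by (rule bcl_plus[OF G bcl_cscale[OF bcl_compose[OF Rb G]]])
  define Gs where "Gs = kadj J (Gamma_z A z0 G (cnj z))"
  have Gs_eq: "Gs = (\<lambda>k. P k + (z - cnj z0) *\<^sub>C P (R k))" unfolding Gs_def
  proof (rule kadj_eq)
    fix h k
    have "ind J (Gamma_z A z0 G (cnj z) h) k
        = ind J (G h) k + (cnj z - z0) * ind J (resolvent A (cnj z) (G h)) k"
      unfolding Gamma_z_def by (simp only: ind_add_left[OF J] ind_scale_left[OF J])
    also have "\<dots> = cinner h (P k) + (cnj z - z0) * cinner h (P (R k))"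
      by (simp only: res_adj[OF J A_sa z(1)] Pind R_def)
    also have "\<dots> = cinner h (P k + (z - cnj z0) *\<^sub>C P (R k))"
      by (simp add: cinner_add_right cinner_scaleC_right)
    finally show "ind J (Gamma_z A z0 G (cnj z) h) k = cinner h (P k + (z - cnj z0) *\<^sub>C P (R k))" .
  qed
  have Gsb: "bounded_clinear Gs" unfolding Gs_eq
    by (rule bcl_plus[OF Pb bcl_cscale[OF bcl_compose[OF Pb Rb]]])
  have Rh_eq: "Rh = (\<lambda>k. R k + Gz (- inv (Q z) (Gs k)))"
    using bspec[OF Ahat z(1)] z(3) unfolding Rh_def R_def Gz_def Gs_def by (simp only: simp_thms)
  define Qi where "Qi = inv (Q z)"
  define Q0i where "Q0i = inv (Q z0)"
  have Qib: "bounded_clinear Qi" using z(3) unfolding Qi_def bdd_invertible_def by blast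
  have Qzi: "Qi (Q z y) = y" for y using z(3) unfolding Qi_def bdd_invertible_def
    by (simp add: bij_is_inj inv_f_f)
  have Q0ii: "Q z0 (Q0i y) = y" for y using Qz0 unfolding Q0i_def bdd_invertible_def
    by (simp add: bij_is_surj surj_f_inv_f)
  define H where "H = hadj (Q z0)"
  have Qz: "Q z y = H y + (z - cnj z0) *\<^sub>C P (Gz y)" for y
  proof -
    have "Q z = (\<lambda>h. hadj (Q z0) h + (z - cnj z0) *\<^sub>C kadj J G (Gamma_z A z0 G z h))"
      by (rule bspec[OF Q_real z(1)])
    from fun_cong[OF this, of y] show ?thesis unfolding H_def P_def Gz_def by (simp only:)
  qed
  have Qz0': "Q z0 y = H y + (z0 - cnj z0) *\<^sub>C P (G y)" for y
  proof -
    have "Gamma_z A z0 G z0 y = G y" by (simp add: Gamma_z_def)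
    moreover have "Q z0 = (\<lambda>h. hadj (Q z0) h + (z0 - cnj z0) *\<^sub>C kadj J G (Gamma_z A z0 G z0 h))"
      by (rule bspec[OF Q_real z0(1)])
    ultimately show ?thesis using fun_cong[OF \<open>Q z0 = _\<close>, of y] unfolding H_def P_def by (simp only:)
  qed
  have F6: "(z - z0) *\<^sub>C Gs (G y) = Q z y - Q z0 y" for y
  proof -
    have e: "P (Gz y) = P (G y) + (z - z0) *\<^sub>C P (R (G y))"
      unfolding Gz_eq by (simp add: bcl_add[OF Pb] bcl_scale[OF Pb])
    show ?thesis unfolding Qz Qz0' Gs_eq e by (simp add: algebra_simps)
  qed
  define t where "t = z - complex_of_real \<alpha>"
  define xi where "xi = (\<Sum>j<l. t ^ j *\<^sub>C x j)"
  define c where "c = t ^ l"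
  define eta where "eta = x (l - 1)"
  define w where "w = R0 eta"
  have jm: "(xi, z *\<^sub>C xi - c *\<^sub>C eta) \<in> A"
    using jordan_sum[OF J A_sa chain, of t] unfolding xi_def c_def eta_def t_def by simp
  have "R ((z *\<^sub>C xi - c *\<^sub>C eta) - z *\<^sub>C xi) = xi" unfolding R_def by (rule res_app[OF J A_sa z(1) jm])
  then have "- (c *\<^sub>C R eta) = xi" by (simp add: bcl_minus[OF Rb] bcl_scale[OF Rb])
  then have F2: "c *\<^sub>C R eta = - xi" by (simp add: minus_equation_iff)
  have wi: "(w, eta + cnj z0 *\<^sub>C w) \<in> A" unfolding w_def R0_def by (rule res_in[OF J A_sa z0c])
  have "R ((eta + cnj z0 *\<^sub>C w) - z *\<^sub>C w) = w" unfolding R_def by (rule res_app[OF J A_sa z(1) wi])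
  moreover have "(eta + cnj z0 *\<^sub>C w) - z *\<^sub>C w = eta - (z - cnj z0) *\<^sub>C w" by (simp add: algebra_simps)
  ultimately have "R eta - (z - cnj z0) *\<^sub>C R w = w" by (simp add: bcl_diff[OF Rb] bcl_scale[OF Rb])
  then have F3: "w + (z - cnj z0) *\<^sub>C R w = R eta" by (simp add: algebra_simps)
  have F4: "Gs w = P (R eta)" unfolding Gs_eq F3[symmetric] by (simp add: bcl_add[OF Pb] bcl_scale[OF Pb])
  have F5: "c *\<^sub>C Gs w = - P xi" unfolding F4 by (simp add: bcl_scale[OF Pb, symmetric] F2 bcl_minus[OF Pb])
  define u where "u = Q0i (P xi)"
  define v where "v = Qi (P xi)"
  have Q0u: "Q z0 u = P xi" unfolding u_def by (rule Q0ii)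
  have "(z - z0) *\<^sub>C Gz (Qi (Gs (G u))) = Gz (Qi ((z - z0) *\<^sub>C Gs (G u)))"
    by (simp add: bcl_scale[OF Qib] bcl_scale[OF Gzb])
  also have "\<dots> = Gz u - Gz v" unfolding F6 Q0u
    by (simp add: bcl_diff[OF Qib] bcl_diff[OF Gzb] Qzi v_def)
  finally have K1: "(z - z0) *\<^sub>C Gz (Qi (Gs (G u))) = Gz u - Gz v" .
  have LHS: "Gamma_z Ahat z0 (\<lambda>h. - G (inv (Q z0) h)) z (P xi) = - Gz v"
  proof -
    have "Gamma_z Ahat z0 (\<lambda>h. - G (inv (Q z0) h)) z (P xi) = - G u + (z - z0) *\<^sub>C Rh (- G u)"
      unfolding Gamma_z_def Rh_def u_def Q0i_def ..
    also have "Rh (- G u) = - R (G u) + Gz (Qi (Gs (G u)))"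
      unfolding Rh_eq Qi_def[symmetric]
      by (simp add: bcl_minus[OF Rb] bcl_minus[OF Gsb] bcl_minus[OF Qib])
    finally have "Gamma_z Ahat z0 (\<lambda>h. - G (inv (Q z0) h)) z (P xi)
       = - G u - (z - z0) *\<^sub>C R (G u) + (z - z0) *\<^sub>C Gz (Qi (Gs (G u)))"
      by (simp add: algebra_simps)
    also have "\<dots> = - Gz u + (Gz u - Gz v)" unfolding K1 by (simp add: Gz_eq algebra_simps)
    finally show ?thesis by simp
  qed
  have zz: "z - cnj z0 \<noteq> 0" using z_ne by simp
  have eRh: "Rh w = R w - Gz (Qi (Gs w))"
    unfolding Rh_eq Qi_def[symmetric] by (simp add: bcl_minus[OF Gzb] bcl_minus[OF Qib])
  have "c *\<^sub>C (w + (z - cnj z0) *\<^sub>C Rh w)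
      = c *\<^sub>C (w + (z - cnj z0) *\<^sub>C R w) - (z - cnj z0) *\<^sub>C Gz (Qi (c *\<^sub>C Gs w))"
    unfolding eRh by (simp add: bcl_scale[OF Gzb] bcl_scale[OF Qib] algebra_simps)
  also have "\<dots> = - xi + (z - cnj z0) *\<^sub>C Gz v"
    unfolding F3 F5 F2 by (simp add: bcl_minus[OF Gzb] bcl_minus[OF Qib] v_def)
  finally have "xi + c *\<^sub>C (w + (z - cnj z0) *\<^sub>C Rh w) = (z - cnj z0) *\<^sub>C Gz v" by simp
  then have RHS: "(- 1 / (z - cnj z0)) *\<^sub>C (xi + c *\<^sub>C (w + (z - cnj z0) *\<^sub>C Rh w)) = - Gz v"
    using zz by simp
  show ?thesis unfolding Let_def
    using LHS RHS unfolding xi_def[symmetric] t_def[symmetric] c_def[symmetric] eta_def[symmetric]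
      R0_def[symmetric] w_def[symmetric] Rh_def[symmetric] P_def[symmetric] by simp
qed


end
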